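(* Let $R$ be a unital associative ring and $M\in{\cal S}$. Then $M^{-1}\in{\cal S}$.
   Context: For $M\in M_3(R)$ with all entries invertible, $J_2(M)$ is the matrix with $(j,k)$-entry $(M_{kj})^{-1}$. ${\cal S}=\{M\in M_3(R):$ all square submatrices of $M$ (including $1\times1$ ones and $M$ itself) are invertible and $J_2(M)$ is invertible$\}$. *)

theory Defs
  imports Main
begin

text \<open>Square matrices of size n over a (possibly noncommutative) unital ring,
represented as functions nat => nat => 'a; only entries with indices < n matter.\<close>

definition mmult :: "nat \<Rightarrow> (nat \<Rightarrow> nat \<Rightarrow> 'a::ring_1) \<Rightarrow> (nat \<Rightarrow> nat \<Rightarrow> 'a) \<Rightarrow> nat \<Rightarrow> nat \<Rightarrow> 'a" where
  "mmult n A B = (\<lambda>i j. \<Sum>k<n. A i k * B k j)"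

definition is_identity :: "nat \<Rightarrow> (nat \<Rightarrow> nat \<Rightarrow> 'a::ring_1) \<Rightarrow> bool" where
  "is_identity n A \<longleftrightarrow> (\<forall>i<n. \<forall>j<n. A i j = (if i = j then 1 else 0))"

definition is_inverse :: "nat \<Rightarrow> (nat \<Rightarrow> nat \<Rightarrow> 'a::ring_1) \<Rightarrow> (nat \<Rightarrow> nat \<Rightarrow> 'a) \<Rightarrow> bool" where
  "is_inverse n A B \<longleftrightarrow> is_identity n (mmult n A B) \<and> is_identity n (mmult n B A)"

definition minvertible :: "nat \<Rightarrow> (nat \<Rightarrow> nat \<Rightarrow> 'a::ring_1) \<Rightarrow> bool" where
  "minvertible n A \<longleftrightarrow> (\<exists>B. is_inverse n A B)"

definition ring_inv :: "'a::ring_1 \<Rightarrow> 'a" where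
  "ring_inv x = (THE y. x * y = 1 \<and> y * x = 1)"

definition all_square_submatrices_invertible :: "(nat \<Rightarrow> nat \<Rightarrow> 'a::ring_1) \<Rightarrow> bool" where
  "all_square_submatrices_invertible M \<longleftrightarrow>
     (\<forall>k r c. 1 \<le> k \<and> k \<le> 3 \<and> strict_mono_on {..<k} r \<and> strict_mono_on {..<k} c \<and>
        r ` {..<k} \<subseteq> {..<3} \<and> c ` {..<k} \<subseteq> {..<3}
        \<longrightarrow> minvertible k (\<lambda>i j. M (r i) (c j)))"

definition J2 :: "(nat \<Rightarrow> nat \<Rightarrow> 'a::ring_1) \<Rightarrow> nat \<Rightarrow> nat \<Rightarrow> 'a" where
  "J2 M = (\<lambda>j k. ring_inv (M k j))"

definition inS :: "(nat \<Rightarrow> nat \<Rightarrow> 'a::ring_1) \<Rightarrow> bool" where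
  "inS M \<longleftrightarrow> all_square_submatrices_invertible M \<and> minvertible 3 (J2 M)"

end

theory Submission
  imports Defs
begin


definition unitr :: "'a::ring_1 \<Rightarrow> bool" where
  "unitr x \<longleftrightarrow> (\<exists>y. x * y = 1 \<and> y * x = 1)"

lemma ring_inv_eq:
  fixes x y :: "'a::ring_1"
  assumes "x * y = 1" "y * x = 1" shows "ring_inv x = y"
  unfolding ring_inv_def
proof (rule the_equality)
  show "x * y = 1 \<and> y * x = 1" using assms by simp
  fix z assume z: "x * z = 1 \<and> z * x = 1"
  have "z = (y * x) * z" using assms by simp
  also have "\<dots> = y * (x * z)" by (simp add: mult.assoc)
  also have "\<dots> = y" using z by simp
  finally show "z = y" .
qed

lemma unitr_inv:
  fixes x :: "'a::ring_1"
  assumes "unitr x" shows "x * ring_inv x = 1" "ring_inv x * x = 1"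
proof -
  obtain y where y: "x * y = 1" "y * x = 1" using assms unfolding unitr_def by blast
  then have "ring_inv x = y" by (rule ring_inv_eq)
  then show "x * ring_inv x = 1" "ring_inv x * x = 1" using y by simp_all
qed

lemma unitr_I: "(x::'a::ring_1) * y = 1 \<Longrightarrow> y * x = 1 \<Longrightarrow> unitr x"
  unfolding unitr_def by blast

lemma unitr_ring_inv: "unitr (x::'a::ring_1) \<Longrightarrow> unitr (ring_inv x)"
  using unitr_inv[of x] unitr_I[of "ring_inv x" x] by simp

lemma ring_inv_inv: "unitr (x::'a::ring_1) \<Longrightarrow> ring_inv (ring_inv x) = x"
  using unitr_inv[of x] ring_inv_eq[of "ring_inv x" x] by simp

lemma unitr_mult: "unitr (x::'a::ring_1) \<Longrightarrow> unitr y \<Longrightarrow> unitr (x * y)"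
proof -
  assume a: "unitr x" "unitr y"
  have i: "x * ring_inv x = 1" "y * ring_inv y = 1" "ring_inv x * x = 1" "ring_inv y * y = 1"
    using a unitr_inv by auto
  show ?thesis
  proof (rule unitr_I[of _ "ring_inv y * ring_inv x"])
    have "x * y * (ring_inv y * ring_inv x) = x * (y * ring_inv y) * ring_inv x" by (simp add: mult.assoc)
    also have "\<dots> = 1" using i by simp
    finally show "x * y * (ring_inv y * ring_inv x) = 1" .
    have "ring_inv y * ring_inv x * (x * y) = ring_inv y * (ring_inv x * x) * y" by (simp add: mult.assoc)
    also have "\<dots> = 1" using i by simp
    finally show "ring_inv y * ring_inv x * (x * y) = 1" .
  qed
qed

lemma unitr_minus: "unitr (x::'a::ring_1) \<Longrightarrow> unitr (- x)"
proof -
  assume "unitr x"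
  then obtain y where "x * y = 1" "y * x = 1" unfolding unitr_def by blast
  then have "(- x) * (- y) = 1" "(- y) * (- x) = 1" by simp_all
  then show ?thesis by (rule unitr_I)
qed

lemma unitr_cancel:
  fixes a x b :: "'a::ring_1"
  assumes "unitr a" "unitr b" "unitr (a * x * b)" shows "unitr x"
proof -
  have i: "ring_inv a * a = 1" "b * ring_inv b = 1" using assms unitr_inv by auto
  have "ring_inv a * (a * x * b) * ring_inv b = (ring_inv a * a) * x * (b * ring_inv b)"
    by (simp add: mult.assoc)
  also have "\<dots> = x" using i by simp
  finally have eq: "ring_inv a * (a * x * b) * ring_inv b = x" .
  have "unitr (ring_inv a * (a * x * b) * ring_inv b)"
    using unitr_mult[OF unitr_mult[OF unitr_ring_inv[OF assms(1)] assms(3)] unitr_ring_inv[OF assms(2)]] .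
  then show ?thesis by (simp only: eq)
qed

lemma sum2: "(\<Sum>k<2. f k) = f 0 + f (1::nat)"
  by (simp add: numeral_2_eq_2)
lemma sum3: "(\<Sum>k<3. f k) = f 0 + f 1 + f (2::nat)"
  by (simp add: numeral_3_eq_3 numeral_2_eq_2)
lemma lt2: "(i::nat) < 2 \<Longrightarrow> i = 0 \<or> i = 1" by linarith
lemma lt3: "(i::nat) < 3 \<Longrightarrow> i = 0 \<or> i = 1 \<or> i = 2" by linarith
lemma all2: "(\<forall>i<(2::nat). P i) \<longleftrightarrow> P 0 \<and> P 1"
proof
  assume a: "P 0 \<and> P 1"
  show "\<forall>i<2. P i"
  proof (intro allI impI)
    fix i :: nat assume "i < 2" then have "i = 0 \<or> i = 1" by (rule lt2)
    then show "P i" using a by (elim disjE) simp_all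
  qed
next
  assume a: "\<forall>i<(2::nat). P i"
  have "P 0" using a by simp
  moreover have "P 1" using a by simp
  ultimately show "P 0 \<and> P 1" by simp
qed
lemma all3: "(\<forall>i<(3::nat). P i) \<longleftrightarrow> P 0 \<and> P 1 \<and> P 2"
proof
  assume a: "P 0 \<and> P 1 \<and> P 2"
  show "\<forall>i<3. P i"
  proof (intro allI impI)
    fix i :: nat assume "i < 3" then have "i = 0 \<or> i = 1 \<or> i = 2" by (rule lt3)
    then show "P i" using a by (elim disjE) simp_all
  qed
next
  assume a: "\<forall>i<(3::nat). P i"
  have "P 0" using a by simp
  moreover have "P 1" using a by simp
  moreover have "P 2" using a by simp
  ultimately show "P 0 \<and> P 1 \<and> P 2" by simp
qed

lemma sum3perm:
  assumes "distinct [p0,p1,p2::nat]" "p0 < 3" "p1 < 3" "p2 < 3"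
  shows "(\<Sum>k<3. f k) = f p0 + f p1 + f p2"
proof -
  have d: "p0 \<noteq> p1" "p0 \<noteq> p2" "p1 \<noteq> p2" using assms(1) by auto
  have c0: "p0 = 0 \<or> p0 = 1 \<or> p0 = 2" using assms(2) by (rule lt3)
  have c1: "p1 = 0 \<or> p1 = 1 \<or> p1 = 2" using assms(3) by (rule lt3)
  have c2: "p2 = 0 \<or> p2 = 1 \<or> p2 = 2" using assms(4) by (rule lt3)
  show ?thesis using c0 c1 c2 d by (elim disjE) (simp_all add: sum3 add_ac)
qed

definition is2 :: "'a::ring_1 \<Rightarrow> 'a \<Rightarrow> 'a \<Rightarrow> 'a \<Rightarrow> 'a \<Rightarrow> 'a \<Rightarrow> 'a \<Rightarrow> 'a \<Rightarrow> bool" where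
  "is2 a b c d e f g h \<longleftrightarrow>
     a*e + b*g = 1 \<and> a*f + b*h = 0 \<and> c*e + d*g = 0 \<and> c*f + d*h = 1 \<and>
     e*a + f*c = 1 \<and> e*b + f*d = 0 \<and> g*a + h*c = 0 \<and> g*b + h*d = 1"

lemma minv2:
  "minvertible 2 X \<longleftrightarrow> (\<exists>e f g h. is2 (X 0 0) (X 0 1) (X 1 0) (X 1 1) e f g h)"
proof
  assume "minvertible 2 X"
  then obtain B where "is_inverse 2 X B" unfolding minvertible_def by blast
  then have "is2 (X 0 0) (X 0 1) (X 1 0) (X 1 1) (B 0 0) (B 0 1) (B 1 0) (B 1 1)"
    unfolding is_inverse_def is_identity_def mmult_def is2_def by (simp add: all2 sum2)
  then show "\<exists>e f g h. is2 (X 0 0) (X 0 1) (X 1 0) (X 1 1) e f g h" by blast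
next
  assume "\<exists>e f g h. is2 (X 0 0) (X 0 1) (X 1 0) (X 1 1) e f g h"
  then obtain e f g h where H: "is2 (X 0 0) (X 0 1) (X 1 0) (X 1 1) e f g h" by blast
  define B :: "nat \<Rightarrow> nat \<Rightarrow> 'a" where "B = (\<lambda>i j::nat. if i = 0 then (if j = 0 then e else f) else (if j = 0 then g else h))"
  have "is_inverse 2 X B" using H
    unfolding is_inverse_def is_identity_def mmult_def is2_def B_def by (simp add: all2 sum2)
  then show "minvertible 2 X" unfolding minvertible_def by blast
qed

lemma minv1: "minvertible 1 X \<longleftrightarrow> unitr (X 0 0)"
proof
  assume "minvertible 1 X"
  then obtain B where "is_inverse 1 X B" unfolding minvertible_def by blast
  then have "X 0 0 * B 0 0 = 1" "B 0 0 * X 0 0 = 1"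
    unfolding is_inverse_def is_identity_def mmult_def by simp_all
  then show "unitr (X 0 0)" by (rule unitr_I)
next
  assume "unitr (X 0 0)"
  then obtain y where y: "X 0 0 * y = 1" "y * X 0 0 = 1" unfolding unitr_def by blast
  have "is_inverse 1 X (\<lambda>_ _. y)"
    unfolding is_inverse_def is_identity_def mmult_def using y by simp
  then show "minvertible 1 X" unfolding minvertible_def by blast
qed

lemma minv_cong:
  assumes "\<And>i j. i < n \<Longrightarrow> j < n \<Longrightarrow> A i j = A' i j"
  shows "minvertible n A \<longleftrightarrow> minvertible n A'"
proof -
  have "\<And>B i j. i < n \<Longrightarrow> j < n \<Longrightarrow> mmult n A B i j = mmult n A' B i j \<and> mmult n B A i j = mmult n B A' i j"
    unfolding mmult_def using assms by (auto intro!: sum.cong)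
  then show ?thesis unfolding minvertible_def is_inverse_def is_identity_def by auto
qed


lemma piv_l:
  fixes m mi n0 X c Y d :: "'a::ring_1"
  assumes "mi * m = 1" "m * n0 + X = 0" "c * n0 + Y = d"
  shows "Y - c * mi * X = d"
proof -
  have "mi * (m * n0 + X) = 0" using assms(2) by simp
  then have "(mi * m) * n0 + mi * X = 0" by (simp add: distrib_left mult.assoc)
  then have "n0 = - (mi * X)" using assms(1) by (simp add: eq_neg_iff_add_eq_0)
  then show ?thesis using assms(3) by (simp add: mult.assoc)
qed

lemma piv_r:
  fixes m mi n0 X c Y d :: "'a::ring_1"
  assumes "m * mi = 1" "n0 * m + X = 0" "n0 * c + Y = d"
  shows "Y - X * mi * c = d"
proof -
  have "(n0 * m + X) * mi = 0" using assms(2) by simp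
  then have "n0 * (m * mi) + X * mi = 0" by (simp add: distrib_right mult.assoc)
  then have "n0 = - (X * mi)" using assms(1) by (simp add: eq_neg_iff_add_eq_0)
  then show ?thesis using assms(3) by (simp add: mult.assoc)
qed

definition perm3 :: "nat \<Rightarrow> nat \<Rightarrow> nat \<Rightarrow> bool" where
  "perm3 a b c \<longleftrightarrow> distinct [a,b,c] \<and> a < 3 \<and> b < 3 \<and> c < 3"

definition invpair :: "nat \<Rightarrow> (nat \<Rightarrow> nat \<Rightarrow> 'a::ring_1) \<Rightarrow> (nat \<Rightarrow> nat \<Rightarrow> 'a) \<Rightarrow> bool" where
  "invpair n M N \<longleftrightarrow> (\<forall>i<n. \<forall>j<n. (\<Sum>k<n. M i k * N k j) = (if i = j then 1 else 0))"

lemma is_inverse_invpair: "is_inverse n M N \<Longrightarrow> invpair n M N \<and> invpair n N M"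
  unfolding is_inverse_def is_identity_def invpair_def mmult_def by simp

lemma sum3p: "perm3 a b c \<Longrightarrow> (\<Sum>k<3. f k) = f a + f b + f c"
  unfolding perm3_def by (rule sum3perm) auto

lemma BL_left:
  fixes M N :: "nat \<Rightarrow> nat \<Rightarrow> 'a::ring_1"
  assumes P: "perm3 p0 p1 p2" and Q: "perm3 q0 q1 q2" and mn: "invpair 3 M N"
    and u: "unitr (M p0 q0)" and i: "i \<in> {p1,p2}" and j: "j \<in> {p1,p2}"
  shows "(M i q1 - M i q0 * ring_inv (M p0 q0) * M p0 q1) * N q1 j
       + (M i q2 - M i q0 * ring_inv (M p0 q0) * M p0 q2) * N q2 j = (if i = j then 1 else 0)"
proof -
  have lt: "p0 < 3" "i < 3" "j < 3" "p0 \<noteq> j" using P i j unfolding perm3_def by auto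
  have e1: "M p0 q0 * N q0 j + (M p0 q1 * N q1 j + M p0 q2 * N q2 j) = 0"
    using mn lt sum3p[OF Q, of "\<lambda>k. M p0 k * N k j"] unfolding invpair_def by (simp add: add.assoc)
  have e2: "M i q0 * N q0 j + (M i q1 * N q1 j + M i q2 * N q2 j) = (if i = j then 1 else 0)"
    using mn lt sum3p[OF Q, of "\<lambda>k. M i k * N k j"] unfolding invpair_def by (simp add: add.assoc)
  have "(M i q1 * N q1 j + M i q2 * N q2 j) - M i q0 * ring_inv (M p0 q0) * (M p0 q1 * N q1 j + M p0 q2 * N q2 j)
        = (if i = j then 1 else 0)"
    by (rule piv_l[OF unitr_inv(2)[OF u] e1 e2])
  then show ?thesis by (simp add: algebra_simps)
qed

lemma BL_right:
  fixes M N :: "nat \<Rightarrow> nat \<Rightarrow> 'a::ring_1"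
  assumes P: "perm3 p0 p1 p2" and Q: "perm3 q0 q1 q2" and nm: "invpair 3 N M"
    and u: "unitr (M p0 q0)" and i: "i \<in> {q1,q2}" and j: "j \<in> {q1,q2}"
  shows "N i p1 * (M p1 j - M p1 q0 * ring_inv (M p0 q0) * M p0 j)
       + N i p2 * (M p2 j - M p2 q0 * ring_inv (M p0 q0) * M p0 j) = (if i = j then 1 else 0)"
proof -
  have lt: "q0 < 3" "i < 3" "j < 3" "i \<noteq> q0" using Q i j unfolding perm3_def by auto
  have e1: "N i p0 * M p0 q0 + (N i p1 * M p1 q0 + N i p2 * M p2 q0) = 0"
    using nm lt sum3p[OF P, of "\<lambda>k. N i k * M k q0"] unfolding invpair_def by (simp add: add.assoc)
  have e2: "N i p0 * M p0 j + (N i p1 * M p1 j + N i p2 * M p2 j) = (if i = j then 1 else 0)"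
    using nm lt sum3p[OF P, of "\<lambda>k. N i k * M k j"] unfolding invpair_def by (simp add: add.assoc)
  have "(N i p1 * M p1 j + N i p2 * M p2 j) - (N i p1 * M p1 q0 + N i p2 * M p2 q0) * ring_inv (M p0 q0) * M p0 j
        = (if i = j then 1 else 0)"
    by (rule piv_r[OF unitr_inv(1)[OF u] e1 e2])
  then show ?thesis by (simp add: algebra_simps)
qed

definition Wm :: "(nat \<Rightarrow> nat \<Rightarrow> 'a::ring_1) \<Rightarrow> nat \<Rightarrow> nat \<Rightarrow> nat \<Rightarrow> nat \<Rightarrow> 'a" where
  "Wm M p0 q0 i j = M i j - M i q0 * ring_inv (M p0 q0) * M p0 j"

lemma BL:
  fixes M N :: "nat \<Rightarrow> nat \<Rightarrow> 'a::ring_1"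
  assumes P: "perm3 p0 p1 p2" and Q: "perm3 q0 q1 q2" and inv: "is_inverse 3 M N"
    and u: "unitr (M p0 q0)"
  shows "is2 (N q1 p1) (N q1 p2) (N q2 p1) (N q2 p2)
             (Wm M p0 q0 p1 q1) (Wm M p0 q0 p1 q2) (Wm M p0 q0 p2 q1) (Wm M p0 q0 p2 q2)"
proof -
  have mn: "invpair 3 M N" and nm: "invpair 3 N M" using is_inverse_invpair[OF inv] by auto
  have d: "p1 \<noteq> p2" "q1 \<noteq> q2" using P Q unfolding perm3_def by auto
  note L = BL_left[OF P Q mn u, folded Wm_def]
  note R = BL_right[OF P Q nm u, folded Wm_def]
  show ?thesis unfolding is2_def
    using L[of p1 p1] L[of p1 p2] L[of p2 p1] L[of p2 p2]
          R[of q1 q1] R[of q1 q2] R[of q2 q1] R[of q2 q2] d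
    by simp
qed

lemma blk_l:
  fixes a b c d e f g h c1 c2 b1 b2 m n0 n1 n2 :: "'a::ring_1"
  assumes E: "e*a + f*c = 1" "e*b + f*d = 0" "g*a + h*c = 0" "g*b + h*d = 1"
    and r1: "c1*n0 + a*n1 + b*n2 = 0" and r2: "c2*n0 + c*n1 + d*n2 = 0"
    and r0: "m*n0 + b1*n1 + b2*n2 = 1"
  shows "(m - b1*(e*c1 + f*c2) - b2*(g*c1 + h*c2)) * n0 = 1"
proof -
  have "e*(c1*n0 + a*n1 + b*n2) + f*(c2*n0 + c*n1 + d*n2) = 0" using r1 r2 by simp
  moreover have "e*(c1*n0 + a*n1 + b*n2) + f*(c2*n0 + c*n1 + d*n2)
      = (e*c1+f*c2)*n0 + (e*a+f*c)*n1 + (e*b+f*d)*n2" by (simp add: algebra_simps)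
  ultimately have "(e*c1+f*c2)*n0 + n1 = 0" using E by simp
  then have x1: "n1 = - ((e*c1+f*c2)*n0)" by (simp add: eq_neg_iff_add_eq_0 add.commute)
  have "g*(c1*n0 + a*n1 + b*n2) + h*(c2*n0 + c*n1 + d*n2) = 0" using r1 r2 by simp
  moreover have "g*(c1*n0 + a*n1 + b*n2) + h*(c2*n0 + c*n1 + d*n2)
      = (g*c1+h*c2)*n0 + (g*a+h*c)*n1 + (g*b+h*d)*n2" by (simp add: algebra_simps)
  ultimately have "(g*c1+h*c2)*n0 + n2 = 0" using E by simp
  then have x2: "n2 = - ((g*c1+h*c2)*n0)" by (simp add: eq_neg_iff_add_eq_0 add.commute)
  have "(m - b1*(e*c1 + f*c2) - b2*(g*c1 + h*c2)) * n0 = m*n0 + b1*(- ((e*c1+f*c2)*n0)) + b2*(- ((g*c1+h*c2)*n0))"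
    by (simp add: algebra_simps)
  also have "\<dots> = 1" using r0 x1 x2 by simp
  finally show ?thesis .
qed

lemma blk_r:
  fixes a b c d e f g h c1 c2 b1 b2 m n0 s1 s2 :: "'a::ring_1"
  assumes E: "a*e + b*g = 1" "a*f + b*h = 0" "c*e + d*g = 0" "c*f + d*h = 1"
    and r1: "n0*b1 + s1*a + s2*c = 0" and r2: "n0*b2 + s1*b + s2*d = 0"
    and r0: "n0*m + s1*c1 + s2*c2 = 1"
  shows "n0 * (m - b1*(e*c1 + f*c2) - b2*(g*c1 + h*c2)) = 1"
proof -
  have "(n0*b1 + s1*a + s2*c)*e + (n0*b2 + s1*b + s2*d)*g = 0" using r1 r2 by simp
  moreover have "(n0*b1 + s1*a + s2*c)*e + (n0*b2 + s1*b + s2*d)*g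
      = n0*(b1*e + b2*g) + s1*(a*e+b*g) + s2*(c*e+d*g)" by (simp add: algebra_simps)
  ultimately have "n0*(b1*e + b2*g) + s1 = 0" using E by simp
  then have x1: "s1 = - (n0*(b1*e + b2*g))" by (simp add: eq_neg_iff_add_eq_0 add.commute)
  have "(n0*b1 + s1*a + s2*c)*f + (n0*b2 + s1*b + s2*d)*h = 0" using r1 r2 by simp
  moreover have "(n0*b1 + s1*a + s2*c)*f + (n0*b2 + s1*b + s2*d)*h
      = n0*(b1*f + b2*h) + s1*(a*f+b*h) + s2*(c*f+d*h)" by (simp add: algebra_simps)
  ultimately have "n0*(b1*f + b2*h) + s2 = 0" using E by simp
  then have x2: "s2 = - (n0*(b1*f + b2*h))" by (simp add: eq_neg_iff_add_eq_0 add.commute)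
  have "n0 * (m - b1*(e*c1 + f*c2) - b2*(g*c1 + h*c2)) = n0*m + (- (n0*(b1*e + b2*g)))*c1 + (- (n0*(b1*f + b2*h)))*c2"
    by (simp add: algebra_simps)
  also have "\<dots> = 1" using r0 x1 x2 by simp
  finally show ?thesis .
qed

lemma BL3:
  fixes M N :: "nat \<Rightarrow> nat \<Rightarrow> 'a::ring_1"
  assumes P: "perm3 p0 p1 p2" and Q: "perm3 q0 q1 q2" and inv: "is_inverse 3 M N"
    and A: "is2 (M p1 q1) (M p1 q2) (M p2 q1) (M p2 q2) e f g h"
  shows "unitr (N q0 p0)"
proof -
  have mn: "invpair 3 M N" and nm: "invpair 3 N M" using is_inverse_invpair[OF inv] by auto
  have lt: "p0 < 3" "p1 < 3" "p2 < 3" "q0 < 3" "q1 < 3" "q2 < 3"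
     "p1 \<noteq> p0" "p2 \<noteq> p0" "q0 \<noteq> q1" "q0 \<noteq> q2" using P Q unfolding perm3_def by auto
  have S: "\<And>i j. i < 3 \<Longrightarrow> j < 3 \<Longrightarrow> M i q0 * N q0 j + M i q1 * N q1 j + M i q2 * N q2 j = (if i = j then 1 else 0)"
    using mn sum3p[OF Q] unfolding invpair_def by metis
  have T: "\<And>i j. i < 3 \<Longrightarrow> j < 3 \<Longrightarrow> N i p0 * M p0 j + N i p1 * M p1 j + N i p2 * M p2 j = (if i = j then 1 else 0)"
    using nm sum3p[OF P] unfolding invpair_def by metis
  have Ae: "M p1 q1 * e + M p1 q2 * g = 1" "M p1 q1 * f + M p1 q2 * h = 0"
     "M p2 q1 * e + M p2 q2 * g = 0" "M p2 q1 * f + M p2 q2 * h = 1"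
     "e * M p1 q1 + f * M p2 q1 = 1" "e * M p1 q2 + f * M p2 q2 = 0"
     "g * M p1 q1 + h * M p2 q1 = 0" "g * M p1 q2 + h * M p2 q2 = 1"
    using A unfolding is2_def by auto
  have l: "(M p0 q0 - M p0 q1*(e*M p1 q0 + f*M p2 q0) - M p0 q2*(g*M p1 q0 + h*M p2 q0)) * N q0 p0 = 1"
    by (rule blk_l[OF Ae(5-8)]) (use S[of p1 p0] S[of p2 p0] S[of p0 p0] lt in simp_all)
  have r: "N q0 p0 * (M p0 q0 - M p0 q1*(e*M p1 q0 + f*M p2 q0) - M p0 q2*(g*M p1 q0 + h*M p2 q0)) = 1"
    by (rule blk_r[OF Ae(1-4)]) (use T[of q0 q1] T[of q0 q2] T[of q0 q0] lt in simp_all)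
  show ?thesis by (rule unitr_I[OF r l])
qed

lemma uinv_simps:
  fixes x y :: "'a::ring_1"
  assumes "unitr x"
  shows "ring_inv x * (x * y) = y" "x * (ring_inv x * y) = y" "x * ring_inv x = 1" "ring_inv x * x = 1"
proof -
  have i: "x * ring_inv x = 1" "ring_inv x * x = 1" using unitr_inv[OF assms] by auto
  show "ring_inv x * (x * y) = y" using i by (simp add: mult.assoc[symmetric])
  show "x * (ring_inv x * y) = y" using i by (simp add: mult.assoc[symmetric])
  show "x * ring_inv x = 1" "ring_inv x * x = 1" by (rule i(1), rule i(2))
qed

lemma Zq:
  fixes p r s t al be ga de :: "'a::ring_1"
  assumes A: "is2 p r s t al be ga de" and u: "unitr p"
  shows "(t - s * ring_inv p * r) * de = 1" "de * (t - s * ring_inv p * r) = 1"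
proof -
  have e: "p*be + r*de = 0" "s*be + t*de = 1" "ga*p + de*s = 0" "ga*r + de*t = 1"
    using A unfolding is2_def by auto
  have "t*de - s * ring_inv p * (r*de) = 1" by (rule piv_l[OF unitr_inv(2)[OF u] e(1) e(2)])
  then show "(t - s * ring_inv p * r) * de = 1" by (simp add: algebra_simps)
  have "de*t - de*s * ring_inv p * r = 1" by (rule piv_r[OF unitr_inv(1)[OF u] e(3) e(4)])
  then show "de * (t - s * ring_inv p * r) = 1" by (simp add: algebra_simps)
qed

lemma is2_sym: "is2 a b c d e f g h \<Longrightarrow> is2 e f g h a b c d"
  unfolding is2_def by auto
lemma is2_swap: "is2 a b c d e f g h \<Longrightarrow> is2 d c b a h g f e"
  unfolding is2_def by (auto simp: add.commute)

lemma Sfac: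
  fixes x v w z :: "'a::ring_1"
  assumes "unitr x" "unitr v" "unitr w" "unitr z"
  shows "ring_inv x - ring_inv v * ring_inv (ring_inv w) * ring_inv z
       = - (ring_inv v * (w - v * ring_inv x * z) * ring_inv z)"
proof -
  have a: "ring_inv (ring_inv w) = w" using assms ring_inv_inv by auto
  show ?thesis unfolding a by (simp add: algebra_simps uinv_simps assms)
qed

lemma inv_neg_prod:
  fixes L T R :: "'a::ring_1"
  assumes "unitr L" "unitr T" "unitr R"
  shows "ring_inv (-(L*T*R)) = -(ring_inv R * ring_inv T * ring_inv L)"
proof (rule ring_inv_eq)
  show "- (L * T * R) * - (ring_inv R * ring_inv T * ring_inv L) = 1"
    by (simp add: mult.assoc uinv_simps assms)
  show "- (ring_inv R * ring_inv T * ring_inv L) * - (L * T * R) = 1"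
    by (simp add: mult.assoc uinv_simps assms)
qed

lemma SIG:
  fixes L0 L1 R0 R1 T00 T01 T10 T11 :: "'a::ring_1"
  assumes "unitr L1" "unitr R1" "unitr T11"
  shows "(-(L0*T00*R0)) - (-(L0*T01*R1)) * ring_inv (-(L1*T11*R1)) * (-(L1*T10*R0))
       = -(L0*(T00 - T01*ring_inv T11*T10)*R0)"
  unfolding inv_neg_prod[OF assms(1,3,2)]
  by (simp add: algebra_simps uinv_simps assms)

lemma Q2:
  fixes q00 q01 q10 q11 :: "'a::ring_1"
  assumes "unitr q10" "unitr q01"
  shows "ring_inv q11 - ring_inv q10 * q00 * ring_inv q01
       = -(ring_inv q10 * (q00 - q10 * ring_inv q11 * q01) * ring_inv q01)"
  by (simp add: algebra_simps uinv_simps assms)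

lemma C2:
  fixes p r s t :: "'a::ring_1"
  assumes ut: "unitr t" and us: "unitr (p - r * ring_inv t * s)"
  shows "\<exists>e f g h. is2 p r s t e f g h"
proof -
  define sg where "sg = p - r * ring_inv t * s"
  define it where "it = ring_inv t"
  define isg where "isg = ring_inv sg"
  have U: "\<And>y. t * (it * y) = y" "\<And>y. it * (t * y) = y" "t * it = 1" "it * t = 1"
    "\<And>y. sg * (isg * y) = y" "\<And>y. isg * (sg * y) = y" "sg * isg = 1" "isg * sg = 1"
    using uinv_simps[OF ut] uinv_simps[OF us] unfolding it_def isg_def sg_def by auto
  have "is2 p r s t isg (-(isg*r*it)) (-(it*s*isg)) (it + it*s*isg*r*it)"
    unfolding is2_def
  proof (intro conjI)
    have "p * isg + r * - (it * s * isg) = sg * isg" by (simp add: sg_def it_def algebra_simps)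
    then show "p * isg + r * - (it * s * isg) = 1" using U by simp
    have "p * - (isg * r * it) + r * (it + it * s * isg * r * it) = r*it - sg * (isg * (r * it))"
      by (simp add: sg_def it_def algebra_simps)
    then show "p * - (isg * r * it) + r * (it + it * s * isg * r * it) = 0" using U by simp
    show "s * isg + t * - (it * s * isg) = 0" by (simp add: algebra_simps U)
    show "s * - (isg * r * it) + t * (it + it * s * isg * r * it) = 1" by (simp add: algebra_simps U)
    have "isg * p + - (isg * r * it) * s = isg * sg" by (simp add: sg_def it_def algebra_simps)
    then show "isg * p + - (isg * r * it) * s = 1" using U by simp
    show "isg * r + - (isg * r * it) * t = 0" by (simp add: algebra_simps U)
    have "- (it * s * isg) * p + (it + it * s * isg * r * it) * s = it * s - it * (s * (isg * sg))"
      by (simp add: sg_def it_def algebra_simps)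
    then show "- (it * s * isg) * p + (it + it * s * isg * r * it) * s = 0" using U by simp
    show "- (it * s * isg) * r + (it + it * s * isg * r * it) * t = 1" by (simp add: algebra_simps U)
  qed
  then show ?thesis by blast
qed

lemma C3s:
  fixes g00 g01 g02 g10 g11 g12 g20 g21 g22 x00 x01 x10 x11 :: "'a::ring_1"
  assumes ug: "unitr g22"
    and X: "is2 (g00 - g02 * ring_inv g22 * g20) (g01 - g02 * ring_inv g22 * g21)
               (g10 - g12 * ring_inv g22 * g20) (g11 - g12 * ring_inv g22 * g21) x00 x01 x10 x11"
  defines "gi \<equiv> ring_inv g22"
  defines "K \<equiv> g20*(x00*g02 + x01*g12) + g21*(x10*g02 + x11*g12)"
  defines "y02 \<equiv> -((x00*g02 + x01*g12)*gi)"
  defines "y12 \<equiv> -((x10*g02 + x11*g12)*gi)"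
  defines "y20 \<equiv> -(gi*(g20*x00 + g21*x10))"
  defines "y21 \<equiv> -(gi*(g20*x01 + g21*x11))"
  defines "y22 \<equiv> gi + gi*K*gi"
  shows "g00*x00 + g01*x10 + g02*y20 = 1 \<and> g00*x01 + g01*x11 + g02*y21 = 0 \<and> g00*y02 + g01*y12 + g02*y22 = 0 \<and>
         g10*x00 + g11*x10 + g12*y20 = 0 \<and> g10*x01 + g11*x11 + g12*y21 = 1 \<and> g10*y02 + g11*y12 + g12*y22 = 0 \<and>
         g20*x00 + g21*x10 + g22*y20 = 0 \<and> g20*x01 + g21*x11 + g22*y21 = 0 \<and> g20*y02 + g21*y12 + g22*y22 = 1 \<and>
         x00*g00 + x01*g10 + y02*g20 = 1 \<and> x00*g01 + x01*g11 + y02*g21 = 0 \<and> x00*g02 + x01*g12 + y02*g22 = 0 \<and>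
         x10*g00 + x11*g10 + y12*g20 = 0 \<and> x10*g01 + x11*g11 + y12*g21 = 1 \<and> x10*g02 + x11*g12 + y12*g22 = 0 \<and>
         y20*g00 + y21*g10 + y22*g20 = 0 \<and> y20*g01 + y21*g11 + y22*g21 = 0 \<and> y20*g02 + y21*g12 + y22*g22 = 1"
proof -
  define s00 where "s00 = g00 - g02 * gi * g20"
  define s01 where "s01 = g01 - g02 * gi * g21"
  define s10 where "s10 = g10 - g12 * gi * g20"
  define s11 where "s11 = g11 - g12 * gi * g21"
  have E: "s00*x00 + s01*x10 = 1" "s00*x01 + s01*x11 = 0" "s10*x00 + s11*x10 = 0" "s10*x01 + s11*x11 = 1"
    "x00*s00 + x01*s10 = 1" "x00*s01 + x01*s11 = 0" "x10*s00 + x11*s10 = 0" "x10*s01 + x11*s11 = 1"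
    using X unfolding is2_def s00_def s01_def s10_def s11_def gi_def by auto
  have U: "\<And>y. g22 * (gi * y) = y" "\<And>y. gi * (g22 * y) = y" "g22 * gi = 1" "gi * g22 = 1"
    using uinv_simps[OF ug] unfolding gi_def by auto
  note D = s00_def s01_def s10_def s11_def y02_def y12_def y20_def y21_def y22_def K_def
  have 1: "g00*x00 + g01*x10 + g02*y20 = s00*x00 + s01*x10" by (simp add: D algebra_simps)
  have 2: "g00*x01 + g01*x11 + g02*y21 = s00*x01 + s01*x11" by (simp add: D algebra_simps)
  have 3: "g00*y02 + g01*y12 + g02*y22 = g02*gi - (s00*x00 + s01*x10)*g02*gi - (s00*x01 + s01*x11)*g12*gi"
    by (simp add: D algebra_simps)
  have 4: "g10*x00 + g11*x10 + g12*y20 = s10*x00 + s11*x10" by (simp add: D algebra_simps)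
  have 5: "g10*x01 + g11*x11 + g12*y21 = s10*x01 + s11*x11" by (simp add: D algebra_simps)
  have 6: "g10*y02 + g11*y12 + g12*y22 = g12*gi - (s10*x00 + s11*x10)*g02*gi - (s10*x01 + s11*x11)*g12*gi"
    by (simp add: D algebra_simps)
  have 7: "g20*x00 + g21*x10 + g22*y20 = 0" by (simp add: D algebra_simps U)
  have 8: "g20*x01 + g21*x11 + g22*y21 = 0" by (simp add: D algebra_simps U)
  have 9: "g20*y02 + g21*y12 + g22*y22 = 1" by (simp add: D algebra_simps U)
  have 10: "x00*g00 + x01*g10 + y02*g20 = x00*s00 + x01*s10" by (simp add: D algebra_simps)
  have 11: "x00*g01 + x01*g11 + y02*g21 = x00*s01 + x01*s11" by (simp add: D algebra_simps)
  have 12: "x00*g02 + x01*g12 + y02*g22 = 0" by (simp add: D algebra_simps U)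
  have 13: "x10*g00 + x11*g10 + y12*g20 = x10*s00 + x11*s10" by (simp add: D algebra_simps)
  have 14: "x10*g01 + x11*g11 + y12*g21 = x10*s01 + x11*s11" by (simp add: D algebra_simps)
  have 15: "x10*g02 + x11*g12 + y12*g22 = 0" by (simp add: D algebra_simps U)
  have 16: "y20*g00 + y21*g10 + y22*g20 = gi*g20 - gi*g20*(x00*s00 + x01*s10) - gi*g21*(x10*s00 + x11*s10)"
    by (simp add: D algebra_simps)
  have 17: "y20*g01 + y21*g11 + y22*g21 = gi*g21 - gi*g20*(x00*s01 + x01*s11) - gi*g21*(x10*s01 + x11*s11)"
    by (simp add: D algebra_simps)
  have 18: "y20*g02 + y21*g12 + y22*g22 = 1" by (simp add: D algebra_simps U)
  show ?thesis using 1 2 3 4 5 6 7 8 9 10 11 12 13 14 15 16 17 18 by (simp add: E)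
qed

lemma C3:
  fixes G :: "nat \<Rightarrow> nat \<Rightarrow> 'a::ring_1"
  assumes ug: "unitr (G 2 2)"
    and X: "is2 (Wm G 2 2 0 0) (Wm G 2 2 0 1) (Wm G 2 2 1 0) (Wm G 2 2 1 1) x00 x01 x10 x11"
  shows "minvertible 3 G"
proof -
  define gi where "gi = ring_inv (G 2 2)"
  define K where "K = G 2 0*(x00*G 0 2 + x01*G 1 2) + G 2 1*(x10*G 0 2 + x11*G 1 2)"
  define y02 where "y02 = -((x00*G 0 2 + x01*G 1 2)*gi)"
  define y12 where "y12 = -((x10*G 0 2 + x11*G 1 2)*gi)"
  define y20 where "y20 = -(gi*(G 2 0*x00 + G 2 1*x10))"
  define y21 where "y21 = -(gi*(G 2 0*x01 + G 2 1*x11))"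
  define y22 where "y22 = gi + gi*K*gi"
  have H: "G 0 0*x00 + G 0 1*x10 + G 0 2*y20 = 1 \<and> G 0 0*x01 + G 0 1*x11 + G 0 2*y21 = 0 \<and> G 0 0*y02 + G 0 1*y12 + G 0 2*y22 = 0 \<and>
         G 1 0*x00 + G 1 1*x10 + G 1 2*y20 = 0 \<and> G 1 0*x01 + G 1 1*x11 + G 1 2*y21 = 1 \<and> G 1 0*y02 + G 1 1*y12 + G 1 2*y22 = 0 \<and>
         G 2 0*x00 + G 2 1*x10 + G 2 2*y20 = 0 \<and> G 2 0*x01 + G 2 1*x11 + G 2 2*y21 = 0 \<and> G 2 0*y02 + G 2 1*y12 + G 2 2*y22 = 1 \<and>
         x00*G 0 0 + x01*G 1 0 + y02*G 2 0 = 1 \<and> x00*G 0 1 + x01*G 1 1 + y02*G 2 1 = 0 \<and> x00*G 0 2 + x01*G 1 2 + y02*G 2 2 = 0 \<and>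
         x10*G 0 0 + x11*G 1 0 + y12*G 2 0 = 0 \<and> x10*G 0 1 + x11*G 1 1 + y12*G 2 1 = 1 \<and> x10*G 0 2 + x11*G 1 2 + y12*G 2 2 = 0 \<and>
         y20*G 0 0 + y21*G 1 0 + y22*G 2 0 = 0 \<and> y20*G 0 1 + y21*G 1 1 + y22*G 2 1 = 0 \<and> y20*G 0 2 + y21*G 1 2 + y22*G 2 2 = 1"
    unfolding gi_def K_def y02_def y12_def y20_def y21_def y22_def
    by (rule C3s[OF ug X[unfolded Wm_def]])
  define B :: "nat \<Rightarrow> nat \<Rightarrow> 'a" where "B = (\<lambda>i j. if i = 0 then (if j = 0 then x00 else if j = 1 then x01 else y02)
     else if i = 1 then (if j = 0 then x10 else if j = 1 then x11 else y12)
     else (if j = 0 then y20 else if j = 1 then y21 else y22))"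
  have "is_inverse 3 G B"
    unfolding is_inverse_def is_identity_def mmult_def using H
    by (simp add: all3 sum3 B_def)
  then show ?thesis unfolding minvertible_def by blast
qed



lemma AS1:
  fixes M :: "nat \<Rightarrow> nat \<Rightarrow> 'a::ring_1"
  assumes "all_square_submatrices_invertible M" "i < 3" "j < 3"
  shows "unitr (M i j)"
proof -
  have sm: "strict_mono_on {..<1} (\<lambda>_::nat. x)" for x :: nat
    unfolding strict_mono_on_def by auto
  have im: "(\<lambda>_::nat. x) ` {..<1} \<subseteq> {..<3}" if "x < 3" for x :: nat
    using that by auto
  have "1 \<le> (1::nat) \<and> 1 \<le> (3::nat) \<and> strict_mono_on {..<1} (\<lambda>_::nat. i) \<and> strict_mono_on {..<1} (\<lambda>_::nat. j) \<and>
        (\<lambda>_::nat. i) ` {..<1} \<subseteq> {..<3} \<and> (\<lambda>_::nat. j) ` {..<1} \<subseteq> {..<3}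
        \<longrightarrow> minvertible 1 (\<lambda>a b. M ((\<lambda>_::nat. i) a) ((\<lambda>_::nat. j) b))"
    using assms(1) unfolding all_square_submatrices_invertible_def by blast
  then have "minvertible 1 (\<lambda>a b. M ((\<lambda>_::nat. i) a) ((\<lambda>_::nat. j) b))"
    using sm[of i] sm[of j] im[of i] im[of j] assms(2,3) by simp
  then show ?thesis unfolding minv1 by simp
qed

lemma AS2:
  fixes M :: "nat \<Rightarrow> nat \<Rightarrow> 'a::ring_1"
  assumes "all_square_submatrices_invertible M" "r0 < r1" "r1 < 3" "c0 < c1" "c1 < 3"
  shows "\<exists>e f g h. is2 (M r0 c0) (M r0 c1) (M r1 c0) (M r1 c1) e f g h"
proof -
  define r :: "nat \<Rightarrow> nat" where "r = (\<lambda>a. if a = 0 then r0 else r1)"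
  define c :: "nat \<Rightarrow> nat" where "c = (\<lambda>a. if a = 0 then c0 else c1)"
  have sm: "strict_mono_on {..<2} (\<lambda>a::nat. if a = 0 then x else y)" if "x < y" for x y :: nat
    unfolding strict_mono_on_def using that by auto
  have im: "(\<lambda>a::nat. if a = 0 then x else y) ` {..<2} \<subseteq> {..<3}" if "x < 3" "y < 3" for x y :: nat
    using that by auto
  have "1 \<le> (2::nat) \<and> 2 \<le> (3::nat) \<and> strict_mono_on {..<2} r \<and> strict_mono_on {..<2} c \<and>
        r ` {..<2} \<subseteq> {..<3} \<and> c ` {..<2} \<subseteq> {..<3}
        \<longrightarrow> minvertible 2 (\<lambda>a b. M (r a) (c b))"
    using assms(1) unfolding all_square_submatrices_invertible_def by blast
  then have "minvertible 2 (\<lambda>a b. M (r a) (c b))"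
    using sm[of r0 r1] sm[of c0 c1] im[of r0 r1] im[of c0 c1] assms(2-5)
    unfolding r_def c_def by simp
  then show ?thesis unfolding minv2 r_def c_def by simp
qed

lemma AS_intro:
  fixes N :: "nat \<Rightarrow> nat \<Rightarrow> 'a::ring_1"
  assumes N1: "\<And>i j. i < 3 \<Longrightarrow> j < 3 \<Longrightarrow> unitr (N i j)"
    and N2: "\<And>r0 r1 c0 c1. r0 < r1 \<Longrightarrow> r1 < 3 \<Longrightarrow> c0 < c1 \<Longrightarrow> c1 < 3 \<Longrightarrow>
               \<exists>e f g h. is2 (N r0 c0) (N r0 c1) (N r1 c0) (N r1 c1) e f g h"
    and N3: "minvertible 3 N"
  shows "all_square_submatrices_invertible N"
  unfolding all_square_submatrices_invertible_def
proof (intro allI impI)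
  fix k :: nat and r c :: "nat \<Rightarrow> nat"
  assume a: "1 \<le> k \<and> k \<le> 3 \<and> strict_mono_on {..<k} r \<and> strict_mono_on {..<k} c \<and>
        r ` {..<k} \<subseteq> {..<3} \<and> c ` {..<k} \<subseteq> {..<3}"
  then have k: "k = 1 \<or> k = 2 \<or> k = 3" by arith
  have sr: "\<And>x y. x < k \<Longrightarrow> y < k \<Longrightarrow> x < y \<Longrightarrow> r x < r y"
    using a unfolding strict_mono_on_def by auto
  have sc: "\<And>x y. x < k \<Longrightarrow> y < k \<Longrightarrow> x < y \<Longrightarrow> c x < c y"
    using a unfolding strict_mono_on_def by auto
  have ir: "\<And>x. x < k \<Longrightarrow> r x < 3" and ic: "\<And>x. x < k \<Longrightarrow> c x < 3" using a by auto
  show "minvertible k (\<lambda>i j. N (r i) (c j))"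
  proof -
    { assume k1: "k = 1"
      have "unitr (N (r 0) (c 0))" using N1 ir[of 0] ic[of 0] k1 by simp
      then have "minvertible 1 (\<lambda>i j. N (r i) (c j))" unfolding minv1 .
      then have ?thesis using k1 by simp }
    moreover
    { assume k2: "k = 2"
      have "r 0 < r 1" "r 1 < 3" "c 0 < c 1" "c 1 < 3" using sr[of 0 1] sc[of 0 1] ir[of 1] ic[of 1] k2 by auto
      then have "\<exists>e f g h. is2 (N (r 0) (c 0)) (N (r 0) (c 1)) (N (r 1) (c 0)) (N (r 1) (c 1)) e f g h"
        by (rule N2)
      then have ?thesis using k2 by (simp add: minv2) }
    moreover
    { assume k3: "k = 3"
      have "r 0 < r 1" "r 1 < r 2" "r 2 < 3" "c 0 < c 1" "c 1 < c 2" "c 2 < 3"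
        using sr[of 0 1] sr[of 1 2] sc[of 0 1] sc[of 1 2] ir[of 2] ic[of 2] k3 by auto
      then have rr: "r 0 = 0" "r 1 = 1" "r 2 = 2" "c 0 = 0" "c 1 = 1" "c 2 = 2" by arith+
      have "\<And>i j. i < 3 \<Longrightarrow> j < 3 \<Longrightarrow> N (r i) (c j) = N i j"
      proof -
        fix i j :: nat assume "i < 3" "j < 3"
        then have "i = 0 \<or> i = 1 \<or> i = 2" "j = 0 \<or> j = 1 \<or> j = 2" by (auto dest: lt3)
        then show "N (r i) (c j) = N i j" using rr by (elim disjE) simp_all
      qed
      then have ?thesis using k3 N3 minv_cong[of 3 "\<lambda>i j. N (r i) (c j)" N] by simp }
    ultimately show ?thesis using k by blast
  qed
qed

lemma perm_of_pair: "(a::nat) < b \<Longrightarrow> b < 3 \<Longrightarrow> perm3 (3 - a - b) a b"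
proof -
  assume "a < b" "b < 3"
  then have "(a = 0 \<and> b = 1) \<or> (a = 0 \<and> b = 2) \<or> (a = 1 \<and> b = 2)" by arith
  then show ?thesis unfolding perm3_def by (elim disjE) auto
qed

lemma others: "(x::nat) < 3 \<Longrightarrow> \<exists>a b. a < b \<and> b < 3 \<and> perm3 x a b"
proof -
  assume "x < 3"
  then have "x = 0 \<or> x = 1 \<or> x = 2" by (rule lt3)
  then show ?thesis
  proof (elim disjE)
    assume "x = 0" then show ?thesis by (intro exI[of _ 1] exI[of _ 2]) (simp add: perm3_def)
  next
    assume "x = 1" then show ?thesis by (intro exI[of _ 0] exI[of _ 2]) (simp add: perm3_def)
  next
    assume "x = 2" then show ?thesis by (intro exI[of _ 0] exI[of _ 1]) (simp add: perm3_def)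
  qed
qed

lemma NU:
  fixes M N :: "nat \<Rightarrow> nat \<Rightarrow> 'a::ring_1"
  assumes AS: "all_square_submatrices_invertible M" and inv: "is_inverse 3 M N" and "i < 3" "j < 3"
  shows "unitr (N i j)"
proof -
  obtain p1 p2 where p: "p1 < p2" "p2 < 3" "perm3 j p1 p2" using others[OF assms(4)] by blast
  obtain q1 q2 where q: "q1 < q2" "q2 < 3" "perm3 i q1 q2" using others[OF assms(3)] by blast
  obtain e f g h where "is2 (M p1 q1) (M p1 q2) (M p2 q1) (M p2 q2) e f g h"
    using AS2[OF AS p(1,2) q(1,2)] by blast
  then show ?thesis by (rule BL3[OF p(3) q(3) inv])
qed

lemma NB:
  fixes M N :: "nat \<Rightarrow> nat \<Rightarrow> 'a::ring_1"
  assumes AS: "all_square_submatrices_invertible M" and inv: "is_inverse 3 M N"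
    and "r0 < r1" "r1 < 3" "c0 < c1" "c1 < 3"
  shows "\<exists>e f g h. is2 (N r0 c0) (N r0 c1) (N r1 c0) (N r1 c1) e f g h"
proof -
  have P: "perm3 (3 - c0 - c1) c0 c1" by (rule perm_of_pair) (use assms in auto)
  have Q: "perm3 (3 - r0 - r1) r0 r1" by (rule perm_of_pair) (use assms in auto)
  have u: "unitr (M (3 - c0 - c1) (3 - r0 - r1))"
    by (rule AS1[OF AS]) (use P Q in \<open>auto simp: perm3_def\<close>)
  show ?thesis using BL[OF P Q inv u] by blast
qed

lemma inv_sym: "is_inverse n M N \<Longrightarrow> is_inverse n N M"
  unfolding is_inverse_def by simp

definition qf :: "(nat \<Rightarrow> nat \<Rightarrow> 'a::ring_1) \<Rightarrow> nat \<Rightarrow> nat \<Rightarrow> 'a" where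
  "qf M b a = M 2 2 - M 2 a * ring_inv (M b a) * M b 2"

lemma qunit:
  fixes M :: "nat \<Rightarrow> nat \<Rightarrow> 'a::ring_1"
  assumes AS: "all_square_submatrices_invertible M" and "b < 2" "a < 2"
  shows "unitr (qf M b a)"
proof -
  obtain e f g h where E: "is2 (M b a) (M b 2) (M 2 a) (M 2 2) e f g h"
    using AS2[OF AS, of b 2 a 2] assms by auto
  have u: "unitr (M b a)" by (rule AS1[OF AS]) (use assms in auto)
  show ?thesis unfolding qf_def using Zq[OF E u] by (blast intro: unitr_I)
qed

lemma qN:
  fixes M N :: "nat \<Rightarrow> nat \<Rightarrow> 'a::ring_1"
  assumes AS: "all_square_submatrices_invertible M" and inv: "is_inverse 3 M N" and "i < 2" "j < 2"
  shows "qf N i j = ring_inv (qf M (1 - j) (1 - i))"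
proof -
  have "i = 0 \<or> i = 1" "j = 0 \<or> j = 1" using assms(3,4) by (auto dest: lt2)
  then have P: "perm3 (1 - j) j 2" and Q: "perm3 (1 - i) i 2" unfolding perm3_def by auto
  have u: "unitr (M (1 - j) (1 - i))" by (rule AS1[OF AS]) (use assms in auto)
  have B: "is2 (N i j) (N i 2) (N 2 j) (N 2 2) (Wm M (1-j) (1-i) j i) (Wm M (1-j) (1-i) j 2)
     (Wm M (1-j) (1-i) 2 i) (Wm M (1-j) (1-i) 2 2)" by (rule BL[OF P Q inv u])
  have un: "unitr (N i j)" by (rule NU[OF AS inv]) (use assms in auto)
  have w: "Wm M (1-j) (1-i) 2 2 = qf M (1 - j) (1 - i)" unfolding Wm_def qf_def by simp
  note z = Zq[OF B un, unfolded w]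
  show ?thesis unfolding qf_def by (rule ring_inv_eq[symmetric]) (use z in \<open>simp_all add: qf_def\<close>)
qed

lemma SJ:
  fixes M :: "nat \<Rightarrow> nat \<Rightarrow> 'a::ring_1"
  assumes U: "\<And>i j. i < 3 \<Longrightarrow> j < 3 \<Longrightarrow> unitr (M i j)" and "a < 3" "b < 3"
  shows "Wm (J2 M) 2 2 a b = -(ring_inv (M 2 a) * qf M b a * ring_inv (M b 2))"
  unfolding Wm_def J2_def qf_def
  by (rule Sfac) (use U assms in auto)

lemma JM:
  fixes M :: "nat \<Rightarrow> nat \<Rightarrow> 'a::ring_1"
  assumes AS: "all_square_submatrices_invertible M" and J: "minvertible 3 (J2 M)"
  shows "unitr (qf M 0 0 - qf M 1 0 * ring_inv (qf M 1 1) * qf M 0 1)"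
proof -
  have U: "\<And>i j. i < 3 \<Longrightarrow> j < 3 \<Longrightarrow> unitr (M i j)" using AS1[OF AS] by blast
  obtain Gi where inv: "is_inverse 3 (J2 M) Gi" using J unfolding minvertible_def by blast
  have P: "perm3 2 0 1" unfolding perm3_def by simp
  have u: "unitr (J2 M 2 2)" unfolding J2_def by (rule unitr_ring_inv[OF U]) auto
  note B = is2_swap[OF is2_sym[OF BL[OF P P inv u]]]
  note S = SJ[OF U]
  define L0 where "L0 = ring_inv (M 2 0)"
  define L1 where "L1 = ring_inv (M 2 1)"
  define R0 where "R0 = ring_inv (M 0 2)"
  define R1 where "R1 = ring_inv (M 1 2)"
  have uL: "unitr L1" "unitr R1" "unitr L0" "unitr R0" unfolding L0_def L1_def R0_def R1_def
    by (rule unitr_ring_inv, rule U, simp, simp)+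
  have uq: "unitr (qf M 1 1)" by (rule qunit[OF AS]) auto
  have W: "Wm (J2 M) 2 2 0 0 = -(L0 * qf M 0 0 * R0)" "Wm (J2 M) 2 2 0 1 = -(L0 * qf M 1 0 * R1)"
     "Wm (J2 M) 2 2 1 0 = -(L1 * qf M 0 1 * R0)" "Wm (J2 M) 2 2 1 1 = -(L1 * qf M 1 1 * R1)"
    unfolding L0_def L1_def R0_def R1_def by (rule S; simp)+
  have uW: "unitr (Wm (J2 M) 2 2 1 1)" unfolding W
    by (intro unitr_minus unitr_mult uL uq)
  have z: "unitr (Wm (J2 M) 2 2 0 0 - Wm (J2 M) 2 2 0 1 * ring_inv (Wm (J2 M) 2 2 1 1) * Wm (J2 M) 2 2 1 0)"
    using Zq[OF B uW] by (blast intro: unitr_I)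
  have "unitr (-(L0 * (qf M 0 0 - qf M 1 0 * ring_inv (qf M 1 1) * qf M 0 1) * R0))"
    using z unfolding W SIG[OF uL(1,2) uq] .
  then have "unitr (L0 * (qf M 0 0 - qf M 1 0 * ring_inv (qf M 1 1) * qf M 0 1) * R0)"
    using unitr_minus by fastforce
  then show ?thesis by (rule unitr_cancel[OF uL(3,4)])
qed

lemma JN:
  fixes N :: "nat \<Rightarrow> nat \<Rightarrow> 'a::ring_1"
  assumes U: "\<And>i j. i < 3 \<Longrightarrow> j < 3 \<Longrightarrow> unitr (N i j)" and uq: "unitr (qf N 1 1)"
    and us: "unitr (qf N 0 0 - qf N 1 0 * ring_inv (qf N 1 1) * qf N 0 1)"
  shows "minvertible 3 (J2 N)"
proof -
  note S = SJ[OF U]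
  define L0 where "L0 = ring_inv (N 2 0)"
  define L1 where "L1 = ring_inv (N 2 1)"
  define R0 where "R0 = ring_inv (N 0 2)"
  define R1 where "R1 = ring_inv (N 1 2)"
  have uL: "unitr L1" "unitr R1" "unitr L0" "unitr R0" unfolding L0_def L1_def R0_def R1_def
    by (rule unitr_ring_inv, rule U, simp, simp)+
  have W: "Wm (J2 N) 2 2 0 0 = -(L0 * qf N 0 0 * R0)" "Wm (J2 N) 2 2 0 1 = -(L0 * qf N 1 0 * R1)"
     "Wm (J2 N) 2 2 1 0 = -(L1 * qf N 0 1 * R0)" "Wm (J2 N) 2 2 1 1 = -(L1 * qf N 1 1 * R1)"
    unfolding L0_def L1_def R0_def R1_def by (rule S; simp)+
  have uW: "unitr (Wm (J2 N) 2 2 1 1)" unfolding W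
    by (intro unitr_minus unitr_mult uL uq)
  have "unitr (-(L0 * (qf N 0 0 - qf N 1 0 * ring_inv (qf N 1 1) * qf N 0 1) * R0))"
    by (intro unitr_minus unitr_mult uL us)
  then have "unitr (Wm (J2 N) 2 2 0 0 - Wm (J2 N) 2 2 0 1 * ring_inv (Wm (J2 N) 2 2 1 1) * Wm (J2 N) 2 2 1 0)"
    unfolding W SIG[OF uL(1,2) uq] .
  then obtain e f g h where X: "is2 (Wm (J2 N) 2 2 0 0) (Wm (J2 N) 2 2 0 1) (Wm (J2 N) 2 2 1 0) (Wm (J2 N) 2 2 1 1) e f g h"
    using C2[OF uW] by blast
  have u: "unitr (J2 N 2 2)" unfolding J2_def by (rule unitr_ring_inv[OF U]) auto
  show ?thesis by (rule C3[OF u X])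
qed

theorem lemma11:
  fixes M N :: "nat \<Rightarrow> nat \<Rightarrow> 'a::ring_1"
  assumes "inS M"
    and "is_inverse 3 M N"
  shows "inS N"
proof -
  have AS: "all_square_submatrices_invertible M" and J: "minvertible 3 (J2 M)"
    using assms(1) unfolding inS_def by auto
  note inv = assms(2)
  have UN: "\<And>i j. i < 3 \<Longrightarrow> j < 3 \<Longrightarrow> unitr (N i j)" by (rule NU[OF AS inv])
  have N3: "minvertible 3 N" using inv_sym[OF inv] unfolding minvertible_def by blast
  have ASN: "all_square_submatrices_invertible N"
    by (rule AS_intro[OF UN NB[OF AS inv] N3])
  have s: "unitr (qf M 0 0 - qf M 1 0 * ring_inv (qf M 1 1) * qf M 0 1)" by (rule JM[OF AS J])
  have q00: "qf N 0 0 = ring_inv (qf M 1 1)" using qN[OF AS inv, of 0 0] by simp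
  have q10: "qf N 1 0 = ring_inv (qf M 1 0)" using qN[OF AS inv, of 1 0] by simp
  have q11: "qf N 1 1 = ring_inv (qf M 0 0)" using qN[OF AS inv, of 1 1] by simp
  have q01: "qf N 0 1 = ring_inv (qf M 0 1)" using qN[OF AS inv, of 0 1] by simp
  have u00: "unitr (qf M 0 0)" and u10: "unitr (qf M 1 0)" and u01: "unitr (qf M 0 1)"
    by (rule qunit[OF AS]; simp)+
  have uq: "unitr (qf N 1 1)" unfolding q11 by (rule unitr_ring_inv[OF u00])
  have "qf N 0 0 - qf N 1 0 * ring_inv (qf N 1 1) * qf N 0 1
      = ring_inv (qf M 1 1) - ring_inv (qf M 1 0) * qf M 0 0 * ring_inv (qf M 0 1)"
    unfolding q00 q10 q11 q01 ring_inv_inv[OF u00] ..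
  also have "\<dots> = -(ring_inv (qf M 1 0) * (qf M 0 0 - qf M 1 0 * ring_inv (qf M 1 1) * qf M 0 1) * ring_inv (qf M 0 1))"
    by (rule Q2[OF u10 u01])
  finally have us: "unitr (qf N 0 0 - qf N 1 0 * ring_inv (qf N 1 1) * qf N 0 1)"
    using s u10 u01 by (simp add: unitr_minus unitr_mult unitr_ring_inv)
  have "minvertible 3 (J2 N)" by (rule JN[OF UN uq us])
  then show ?thesis unfolding inS_def using ASN by simp
qed


end
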